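(* Let $r>0$, $\delta>0$, $R:=r/\delta$, and suppose $R+\tfrac12\in\mathbb{Z}$. Then $$\int_{-\pi}^{\pi}\Delta_\delta(r\cos\theta)\cos\theta\,d\theta\ \ge\ \frac{16\sqrt2}{3\pi^2}\,\frac{\delta^{3/2}}{\sqrt r}.$$
   Context: For $\delta>0$, $Q_\delta(t):=\delta\lfloor t/\delta+1/2\rfloor$ and $\Delta_\delta(t):=t-Q_\delta(t)$. *)

theory Defs
  imports "HOL-Analysis.Analysis"
begin

definition Qd :: "real \<Rightarrow> real \<Rightarrow> real" where
  "Qd \<delta> t = \<delta> * of_int \<lfloor>t / \<delta> + 1/2\<rfloor>"

definition Dd :: "real \<Rightarrow> real \<Rightarrow> real" where
  "Dd \<delta> t = t - Qd \<delta> t"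

end

theory Submission
  imports Defs
begin

lemma cos_lb: "1 - x^2/2 \<le> cos (x::real)"
proof -
  have "cos x = 1 - 2 * (sin (x/2))^2" using cos_double_sin[of "x/2"] by simp
  moreover have "\<bar>sin (x/2)\<bar> \<le> \<bar>x/2\<bar>" by (rule abs_sin_x_le_abs_x)
  hence "(sin (x/2))^2 \<le> (x/2)^2" by (metis abs_le_square_iff)
  ultimately show ?thesis by (simp add: power_divide)
qed

definition phi :: "real \<Rightarrow> real" where "phi x = frac x * (1 - frac x)"

lemma phi_isCont: "isCont phi x"
proof (cases "x \<in> \<int>")
  case False
  then show ?thesis unfolding phi_def by (intro continuous_intros continuous_frac)
next
  case True
  have ev: "eventually (\<lambda>y. phi y = \<bar>y - x\<bar> * (1 - \<bar>y - x\<bar>)) (nhds x)"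
    unfolding eventually_nhds_metric
  proof (intro exI[of _ "1/2"] conjI allI impI)
    fix y assume "dist y x < 1/2"
    hence d: "\<bar>y - x\<bar> < 1/2" by (simp add: dist_real_def)
    show "phi y = \<bar>y - x\<bar> * (1 - \<bar>y - x\<bar>)"
    proof (cases "y \<ge> x")
      case True
      have "frac y = y - x" using True d \<open>x \<in> \<int>\<close> by (subst frac_unique_iff) auto
      thus ?thesis using True by (simp add: phi_def)
    next
      case False
      have "y - (y - x + 1) = x - 1" by simp
      hence "frac y = y - x + 1" using False d \<open>x \<in> \<int>\<close>
        by (subst frac_unique_iff) (auto intro: Ints_diff)
      hence "phi y = (y - x + 1) * (x - y)" by (simp add: phi_def)
      thus ?thesis using False by (simp add: abs_of_neg algebra_simps)
    qed
  qed simp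
  show ?thesis by (subst isCont_cong[OF ev]) (intro continuous_intros)
qed

definition pF :: "real \<Rightarrow> real \<Rightarrow> real" where "pF R t = phi (R * cos t + 1/2)"
definition HF :: "real \<Rightarrow> real \<Rightarrow> real" where
  "HF R t = - pF R t * cos t / (2 * R * sin t)"
definition GF :: "real \<Rightarrow> real \<Rightarrow> real" where
  "GF R t = (if sin t = 0 then 1/4 else pF R t / (2 * R * (sin t)^2))"
definition FF :: "real \<Rightarrow> real \<Rightarrow> real" where
  "FF R t = (frac (R * cos t + 1/2) - 1/2) * cos t"

lemma pF_isCont: "isCont (pF R) t"
  unfolding pF_def[abs_def]
  by (rule isCont_o2[OF _ phi_isCont]) (intro continuous_intros)

lemma pF_near0:
  assumes "R + 1/2 \<in> \<int>" "R * (1 - cos t) < 1" "R > 0"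
  shows "pF R t = R * (1 - cos t) * (1 - R * (1 - cos t))"
proof -
  define a where "a = R * (1 - cos t)"
  have a0: "a \<ge> 0" using assms(3) by (simp add: a_def)
  have x: "R * cos t + 1/2 = (R + 1/2) - a" by (simp add: a_def algebra_simps)
  show ?thesis
  proof (cases "a = 0")
    case True
    hence "R * cos t + 1/2 \<in> \<int>" using assms(1) x by (simp only: diff_zero)
    thus ?thesis using True by (simp add: pF_def phi_def a_def[symmetric])
  next
    case False
    have "(R + 1/2) - a - (1 - a) = (R + 1/2) - 1" by simp
    also have "\<dots> \<in> \<int>" using assms(1) by (intro Ints_diff Ints_1)
    finally have i: "(R + 1/2) - a - (1 - a) \<in> \<int>" .
    have "a < 1" using assms(2) by (simp add: a_def)
    hence "frac (R * cos t + 1/2) = 1 - a" unfolding x using a0 False i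
      by (subst frac_unique_iff) auto
    thus ?thesis by (simp add: pF_def phi_def a_def[symmetric] mult.commute)
  qed
qed

lemma pF_nearpi:
  assumes "R + 1/2 \<in> \<int>" "R * (1 + cos t) < 1" "R > 0"
  shows "pF R t = R * (1 + cos t) * (1 - R * (1 + cos t))"
proof -
  define b where "b = R * (1 + cos t)"
  have "1 + cos t \<ge> 0" using cos_ge_minus_one[of t] by linarith
  hence b0: "b \<ge> 0" unfolding b_def using assms(3) by simp
  have x: "R * cos t + 1/2 - b = 1 - (R + 1/2)" by (simp add: b_def algebra_simps)
  have i: "R * cos t + 1/2 - b \<in> \<int>" unfolding x using assms(1) by (intro Ints_diff Ints_1)
  have "b < 1" using assms(2) by (simp add: b_def)
  hence "frac (R * cos t + 1/2) = b" using b0 i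
    by (subst frac_unique_iff) auto
  thus ?thesis by (simp add: pF_def phi_def b_def[symmetric])
qed

lemma HF_isCont_gen: "sin t \<noteq> 0 \<Longrightarrow> R > 0 \<Longrightarrow> isCont (HF R) t"
  unfolding HF_def[abs_def] by (intro continuous_intros pF_isCont) auto

lemma HF_eq0:
  fixes R t :: real
  assumes "R > 0" "sin t \<noteq> 0" "1 + cos t \<noteq> 0"
  shows "- (R * (1 - cos t) * (1 - R * (1 - cos t))) * cos t / (2 * R * sin t)
     = - sin t * (1 - R*(1-cos t)) * cos t / (2*(1+cos t))"
proof -
  have s: "sin t * sin t = (1 - cos t) * (1 + cos t)" using sin_squared_eq[of t] by (simp add: power2_eq_square algebra_simps)
  have "(- (R * (1 - cos t) * (1 - R * (1 - cos t))) * cos t) * (2*(1+cos t)) = (- sin t * (1 - R*(1-cos t)) * cos t) * (2 * R * sin t)"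
    using s by algebra
  thus ?thesis using assms by (subst frac_eq_eq) auto
qed

lemma HF_eqpi:
  fixes R t :: real
  assumes "R > 0" "sin t \<noteq> 0" "1 - cos t \<noteq> 0"
  shows "- (R * (1 + cos t) * (1 - R * (1 + cos t))) * cos t / (2 * R * sin t)
     = - sin t * (1 - R*(1+cos t)) * cos t / (2*(1-cos t))"
proof -
  have s: "sin t * sin t = (1 - cos t) * (1 + cos t)" using sin_squared_eq[of t] by (simp add: power2_eq_square algebra_simps)
  have "(- (R * (1 + cos t) * (1 - R * (1 + cos t))) * cos t) * (2*(1-cos t)) = (- sin t * (1 - R*(1+cos t)) * cos t) * (2 * R * sin t)"
    using s by algebra
  thus ?thesis using assms by (subst frac_eq_eq) auto
qed

lemma small_sq: assumes "R > 0" "\<bar>x\<bar> < sqrt (1/R)" shows "R * x^2 < 1"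
proof -
  have "x^2 = \<bar>x\<bar>^2" by simp
  also have "\<dots> < (sqrt (1/R))^2" using assms by (intro power_strict_mono) auto
  also have "\<dots> = 1/R" using assms by simp
  finally show ?thesis using assms by (simp add: field_simps)
qed

lemma HF_isCont0:
  assumes R: "R > 0" "R + 1/2 \<in> \<int>"
  shows "isCont (HF R) 0"
proof -
  define E where "E t = - sin t * (1 - R*(1-cos t)) * cos t / (2*(1+cos t))" for t
  have ev: "eventually (\<lambda>t. HF R t = E t) (nhds 0)"
    unfolding eventually_nhds_metric
  proof (intro exI[of _ "min 1 (sqrt (1/R))"] conjI allI impI)
    fix t :: real assume "dist t 0 < min 1 (sqrt (1/R))"
    hence t1: "\<bar>t\<bar> < 1" and t2: "\<bar>t\<bar> < sqrt (1/R)" by (auto simp: dist_real_def)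
    have "R * t^2 < 1" using small_sq[OF R(1) t2] .
    moreover have "R * (1 - cos t) \<le> R * (t^2/2)" using cos_lb[of t] R(1) by (intro mult_left_mono) auto
    ultimately have a1: "R * (1 - cos t) < 1" by simp
    have "cos t > 0" using t1 pi_gt3 by (intro cos_gt_zero_pi) auto
    hence c: "1 + cos t \<noteq> 0" by simp
    show "HF R t = E t"
    proof (cases "sin t = 0")
      case True thus ?thesis by (simp add: HF_def E_def)
    next
      case False
      show ?thesis unfolding HF_def E_def pF_near0[OF R(2) a1 R(1)] using HF_eq0[OF R(1) False c] .
    qed
  qed (use R in simp)
  have "isCont E 0" unfolding E_def[abs_def] by (intro continuous_intros) auto
  thus ?thesis by (subst isCont_cong[OF ev])
qed

lemma HF_isContpi:
  assumes R: "R > 0" "R + 1/2 \<in> \<int>" and u: "cos u = -1" "sin u = 0"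
  shows "isCont (HF R) u"
proof -
  define E where "E t = - sin t * (1 - R*(1+cos t)) * cos t / (2*(1-cos t))" for t
  have cd: "cos (t - u) = - cos t" for t by (simp add: cos_diff u)
  have ev: "eventually (\<lambda>t. HF R t = E t) (nhds u)"
    unfolding eventually_nhds_metric
  proof (intro exI[of _ "min 1 (sqrt (1/R))"] conjI allI impI)
    fix t :: real assume "dist t u < min 1 (sqrt (1/R))"
    hence t1: "\<bar>t - u\<bar> < 1" and t2: "\<bar>t - u\<bar> < sqrt (1/R)" by (auto simp: dist_real_def)
    have "R * (t - u)^2 < 1" using small_sq[OF R(1) t2] .
    moreover have "R * (1 - cos (t - u)) \<le> R * ((t - u)^2/2)" using cos_lb[of "t - u"] R(1) by (intro mult_left_mono) auto
    ultimately have a1: "R * (1 + cos t) < 1" using cd[of t] by simp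
    have "cos (t - u) > 0" using t1 pi_gt3 by (intro cos_gt_zero_pi) auto
    hence c: "1 - cos t \<noteq> 0" using cd[of t] by simp
    show "HF R t = E t"
    proof (cases "sin t = 0")
      case True thus ?thesis by (simp add: HF_def E_def)
    next
      case False
      show ?thesis unfolding HF_def E_def pF_nearpi[OF R(2) a1 R(1)] using HF_eqpi[OF R(1) False c] .
    qed
  qed (use R in simp)
  have "isCont E u" unfolding E_def[abs_def] using u by (intro continuous_intros) auto
  thus ?thesis by (subst isCont_cong[OF ev])
qed

lemma HF_cont:
  assumes R: "R > 0" "R + 1/2 \<in> \<int>"
  shows "continuous_on {-pi..pi} (HF R)"
proof (intro continuous_at_imp_continuous_on ballI)
  fix t assume t: "t \<in> {-pi..pi}"
  show "isCont (HF R) t"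
  proof (cases "sin t = 0")
    case False thus ?thesis using HF_isCont_gen R by blast
  next
    case True
    then obtain i :: int where i: "t = of_int i * pi" by (auto simp: sin_zero_iff_int2)
    have "real_of_int (-1) * pi \<le> real_of_int i * pi" "real_of_int i * pi \<le> real_of_int 1 * pi"
      using t i by auto
    hence "-1 \<le> i" "i \<le> 1" using pi_gt_zero by (simp_all only: mult_le_cancel_right of_int_le_iff)
    hence "i = -1 \<or> i = 0 \<or> i = 1" by auto
    thus ?thesis using i HF_isCont0[OF R] HF_isContpi[OF R, of pi] HF_isContpi[OF R, of "-pi"] by auto
  qed
qed

lemma HF_deriv:
  assumes R: "R > 0" and s: "sin t \<noteq> 0" and x: "R * cos t + 1/2 \<notin> \<int>"
  shows "(HF R has_real_derivative (GF R t - FF R t)) (at t)"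
proof -
  define D where "D s = R * cos s + 1/2 - of_int \<lfloor>R * cos s + 1/2\<rfloor>" for s
  have fl: "((\<lambda>s. of_int \<lfloor>R * cos s + 1/2\<rfloor>) has_real_derivative 0) (at t)"
    by (rule floor_has_real_derivative) (use x in \<open>auto intro!: continuous_intros\<close>)
  have d1: "(D has_real_derivative (- R * sin t)) (at t)"
    unfolding D_def[abs_def]
    by (rule derivative_eq_intros fl | simp)+
  have eq: "HF R = (\<lambda>s. - (D s * (1 - D s)) * cos s / (2 * R * sin s))"
    by (auto simp: fun_eq_iff HF_def pF_def phi_def frac_def D_def)
  have gf: "GF R t = D t * (1 - D t) / (2 * R * (sin t)^2)"
    using s by (simp add: GF_def pF_def phi_def frac_def D_def)
  have ff: "FF R t = (D t - 1/2) * cos t" by (simp add: FF_def frac_def D_def)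
  have sc: "sin t ^2 + cos t ^2 = 1" by simp
  have B: "2*R* sin t*(2*R* sin t) \<noteq> 0" using s R by simp
  have k1: "D t*(1-D t)/(2*R*(sin t)^2) * (2*R* sin t*(2*R* sin t)) = 2*R*(D t*(1-D t))"
    using s R by (simp add: power2_eq_square field_simps)
  have k2: "((- (- R * sin t * (1 - D t) + (0 - - R * sin t) * D t) * cos t +
       - sin t * 1 * - (D t * (1 - D t))) * (2 * R * sin t) -
      - (D t * (1 - D t)) * cos t * (0 * sin t + cos t * 1 * (2 * R)))
     = (D t*(1-D t)/(2*R*(sin t)^2) - (D t - 1/2)*cos t) * (2*R* sin t*(2*R* sin t))"
    unfolding left_diff_distrib k1 using sc by algebra
  have key: "((- (- R * sin t * (1 - D t) + (0 - - R * sin t) * D t) * cos t +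
       - sin t * 1 * - (D t * (1 - D t))) * (2 * R * sin t) -
      - (D t * (1 - D t)) * cos t * (0 * sin t + cos t * 1 * (2 * R))) /
     (2 * R * sin t * (2 * R * sin t)) = GF R t - FF R t"
    unfolding gf ff k2 using B by simp
  show ?thesis unfolding eq
    apply (rule derivative_eq_intros d1 refl)+
     apply (use s R in simp)
    apply (rule key)
    done
qed

lemma finite_S2:
  assumes R: "R > 0"
  shows "finite {t \<in> {-pi..pi}. R * cos t + 1/2 \<in> \<int>}"
proof -
  define K where "K = {-(\<lceil>R\<rceil>+1)..\<lceil>R\<rceil>+1}"
  define A where "A = (\<lambda>k::int. (of_int k - 1/2) / R) ` K"
  have fA: "finite A" by (simp add: A_def K_def)
  have "{t \<in> {-pi..pi}. R * cos t + 1/2 \<in> \<int>} \<subseteq> arccos ` A \<union> (\<lambda>c. - arccos c) ` A"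
  proof
    fix t assume t: "t \<in> {t \<in> {-pi..pi}. R * cos t + 1/2 \<in> \<int>}"
    then obtain k where k: "R * cos t + 1/2 = of_int k" by (auto elim: Ints_cases)
    have c: "cos t = (of_int k - 1/2) / R" using k R by (simp add: field_simps)
    have "R * cos t \<le> R * 1" "R * (-1) \<le> R * cos t" using R cos_le_one[of t] cos_ge_minus_one[of t]
      by (intro mult_left_mono; simp)+
    hence "of_int k \<le> R + 1" "- R - 1 \<le> of_int k" using k by linarith+
    moreover have "R \<le> of_int \<lceil>R\<rceil>" by (rule le_of_int_ceiling)
    ultimately have "real_of_int k \<le> of_int \<lceil>R\<rceil> + 1" "- of_int \<lceil>R\<rceil> - 1 \<le> real_of_int k" by linarith+
    hence "k \<le> \<lceil>R\<rceil> + 1" "- \<lceil>R\<rceil> - 1 \<le> k" by linarith+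
    hence "k \<in> K" unfolding K_def by simp
    hence cA: "cos t \<in> A" unfolding A_def c by blast
    show "t \<in> arccos ` A \<union> (\<lambda>c. - arccos c) ` A"
    proof (cases "t \<ge> 0")
      case True
      hence "t = arccos (cos t)" using t by (simp add: arccos_cos)
      thus ?thesis using cA by blast
    next
      case False
      hence "t = - arccos (cos t)" using t by (simp add: arccos_cos2)
      thus ?thesis using cA by blast
    qed
  qed
  thus ?thesis using fA by (meson finite_UnI finite_imageI finite_subset)
qed

lemma GF_FF_integral:
  assumes R: "R > 0" "R + 1/2 \<in> \<int>"
  shows "((\<lambda>t. GF R t - FF R t) has_integral 0) {-pi..pi}"
proof -
  define S where "S = {-pi,0,pi} \<union> {t \<in> {-pi..pi}. R * cos t + 1/2 \<in> \<int>}"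
  have fS: "finite S" unfolding S_def using finite_S2[OF R(1)] by simp
  have "((\<lambda>t. GF R t - FF R t) has_integral (HF R pi - HF R (-pi))) {-pi..pi}"
  proof (rule fundamental_theorem_of_calculus_interior_strong[OF fS])
    show "- pi \<le> pi" by simp
    show "continuous_on {-pi..pi} (HF R)" by (rule HF_cont[OF R])
    fix x assume x: "x \<in> {-pi<..<pi} - S"
    have "sin x \<noteq> 0"
    proof (cases "x > 0")
      case True thus ?thesis using x sin_gt_zero[of x] by auto
    next
      case False
      hence "x < 0" using x by (auto simp: S_def)
      thus ?thesis using x sin_gt_zero[of "-x"] by auto
    qed
    moreover have "R * cos x + 1/2 \<notin> \<int>" using x by (auto simp: S_def)
    ultimately show "(HF R has_vector_derivative (GF R x - FF R x)) (at x)"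
      using HF_deriv[OF R(1)] by (simp add: has_real_derivative_iff_has_vector_derivative)
  qed
  thus ?thesis by (simp add: HF_def)
qed

lemma FF_meas: "FF R \<in> borel_measurable borel"
  unfolding FF_def[abs_def] frac_def by measurable

lemma FF_integrable: "FF R integrable_on {-pi..pi}"
proof (rule measurable_bounded_by_integrable_imp_integrable_real[where g="\<lambda>_. 1"])
  show "FF R \<in> borel_measurable (lebesgue_on {-pi..pi})"
    using FF_meas by (simp add: measurable_completion measurable_restrict_space1)
  show "(\<lambda>_. 1::real) integrable_on {-pi..pi}" by (rule integrable_const_ivl)
  fix x
  have "0 \<le> frac (R * cos x + 1/2)" "frac (R * cos x + 1/2) < 1" by (rule frac_ge_0, rule frac_lt_1)
  hence "\<bar>frac (R * cos x + 1/2) - 1/2\<bar> \<le> 1" by (simp only: abs_le_iff) linarith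
  moreover have "\<bar>cos x\<bar> \<le> 1" by simp
  ultimately show "\<bar>FF R x\<bar> \<le> 1" unfolding FF_def abs_mult by (intro mult_le_one) auto
qed simp

lemma GF_lb0:
  assumes R: "R > 0" "R + 1/2 \<in> \<int>" and t: "R * t^2 / 2 < 1"
  shows "(1 - R * t^2 / 2) / 4 \<le> GF R t"
proof (cases "sin t = 0")
  case True thus ?thesis using R by (simp add: GF_def)
next
  case False
  define a where "a = R * (1 - cos t)"
  have "a \<le> R * (t^2/2)" unfolding a_def using cos_lb[of t] R(1) by (intro mult_left_mono) auto
  hence a1: "a < 1" "1 - R * t^2 / 2 \<le> 1 - a" using t by auto
  have c1: "cos t \<noteq> 1" "cos t \<noteq> -1" using False sin_squared_eq[of t] by auto
  have cp: "1 + cos t > 0" using c1 cos_ge_minus_one[of t] by linarith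
  have p: "pF R t = a * (1 - a)" using pF_near0[OF R(2) _ R(1)] a1 by (simp add: a_def)
  have ss: "(sin t)^2 = (1 - cos t) * (1 + cos t)" using sin_squared_eq[of t] by (simp add: algebra_simps power2_eq_square)
  have "a * (1 - a) * (2 * (1 + cos t)) = (1 - a) * (2 * R * ((1 - cos t) * (1 + cos t)))"
    using a_def by algebra
  hence "GF R t = (1 - a) / (2 * (1 + cos t))"
    using False c1 R(1) cp unfolding GF_def p ss by (simp add: frac_eq_eq)
  moreover have "(1 - a) / 4 \<le> (1 - a) / (2 * (1 + cos t))"
    using a1 cp cos_le_one[of t] by (intro divide_left_mono) auto
  ultimately show ?thesis using a1 by (smt (verit) divide_right_mono)
qed

lemma GF_lbpi:
  assumes R: "R > 0" "R + 1/2 \<in> \<int>" and u: "cos u = -1" "sin u = 0" and t: "R * (t - u)^2 / 2 < 1"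
  shows "(1 - R * (t - u)^2 / 2) / 4 \<le> GF R t"
proof (cases "sin t = 0")
  case True thus ?thesis using R by (simp add: GF_def)
next
  case False
  have cd: "cos (t - u) = - cos t" by (simp add: cos_diff u)
  define b where "b = R * (1 + cos t)"
  have "b \<le> R * ((t - u)^2/2)" unfolding b_def using cos_lb[of "t - u"] R(1) cd by (intro mult_left_mono) auto
  hence b1: "b < 1" "1 - R * (t - u)^2 / 2 \<le> 1 - b" using t by auto
  have c1: "cos t \<noteq> 1" "cos t \<noteq> -1" using False sin_squared_eq[of t] by auto
  have cp: "1 - cos t > 0" using c1 cos_le_one[of t] by linarith
  have c4: "2 * (1 - cos t) \<le> 4" by (smt (verit) cos_ge_minus_one)
  have p: "pF R t = b * (1 - b)" using pF_nearpi[OF R(2) _ R(1)] b1 by (simp add: b_def)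
  have ss: "(sin t)^2 = (1 - cos t) * (1 + cos t)" using sin_squared_eq[of t] by (simp add: algebra_simps power2_eq_square)
  have "b * (1 - b) * (2 * (1 - cos t)) = (1 - b) * (2 * R * ((1 - cos t) * (1 + cos t)))"
    using b_def by algebra
  hence "GF R t = (1 - b) / (2 * (1 - cos t))"
    using False c1 R(1) cp unfolding GF_def p ss by (simp add: frac_eq_eq)
  moreover have "(1 - b) / 4 \<le> (1 - b) / (2 * (1 - cos t))"
    using b1 cp c4 by (intro divide_left_mono) auto
  ultimately show ?thesis using b1 by (smt (verit) divide_right_mono)
qed

lemma poly_deriv: "((\<lambda>t. (t - u) / 4 - (R / 24) * (t - u)^3) has_real_derivative (1 - R * (t - u)^2 / 2) / 4) (at t)"
  by (auto intro!: derivative_eq_intros simp: power2_eq_square field_simps)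

lemma poly_int:
  fixes R a b u :: real assumes "a \<le> b"
  shows "((\<lambda>t. (1 - R * (t - u)^2 / 2) / 4) has_integral
     (((b - u) / 4 - (R / 24) * (b - u)^3) - ((a - u) / 4 - (R / 24) * (a - u)^3))) {a..b}"
  apply (rule fundamental_theorem_of_calculus)
  using assms apply simp
  apply (rule has_vector_derivative_at_within)
  apply (subst has_real_derivative_iff_has_vector_derivative[symmetric])
  apply (rule poly_deriv)
  done

lemma poly_int_right:
  fixes R u T :: real assumes "T \<ge> 0"
  shows "((\<lambda>t. (1 - R * (t - u)^2 / 2) / 4) has_integral (T - R * T^3 / 6) / 4) {u..u+T}"
proof -
  have e: "((u + T - u) / 4 - R / 24 * (u + T - u) ^ 3 - ((u - u) / 4 - R / 24 * (u - u) ^ 3)) = (T - R * T^3 / 6) / 4"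
    by (simp add: field_simps)
  show ?thesis using poly_int[of u "u+T" R u] assms unfolding e by simp
qed

lemma poly_int_left:
  fixes R u T :: real assumes "T \<ge> 0"
  shows "((\<lambda>t. (1 - R * (t - u)^2 / 2) / 4) has_integral (T - R * T^3 / 6) / 4) {u-T..u}"
proof -
  have e: "((u - u) / 4 - R / 24 * (u - u) ^ 3 - ((u - T - u) / 4 - R / 24 * (u - T - u) ^ 3)) = (T - R * T^3 / 6) / 4"
    by (simp add: field_simps power3_eq_cube)
  show ?thesis using poly_int[of "u-T" u R u] assms unfolding e by simp
qed
lemma GF_nonneg: "R > 0 \<Longrightarrow> 0 \<le> GF R t"
proof -
  assume R: "R > 0"
  have "0 \<le> pF R t" unfolding pF_def phi_def using frac_lt_1[of "R * cos t + 1/2"] by simp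
  thus ?thesis using R by (simp add: GF_def)
qed

lemma GF_integral_lb:
  assumes R: "R > 0" "R + 1/2 \<in> \<int>"
  defines "T \<equiv> 3/4 * sqrt (2/R)"
  assumes Gi: "GF R integrable_on {-pi..pi}"
  shows "T - R * T^3 / 6 \<le> integral {-pi..pi} (GF R)"
proof -
  obtain m where m: "R + 1/2 = of_int m" using R(2) by (auto elim: Ints_cases)
  have "of_int m > (1/2::real)" using m R(1) by linarith
  hence "m \<ge> 1" by linarith
  hence R1: "R \<ge> 1/2" using m by linarith
  have T0: "T \<ge> 0" unfolding T_def using R(1) by simp
  have "2/R \<le> 4" using R1 by (simp add: field_simps)
  hence "sqrt (2/R) \<le> 2" using real_sqrt_le_mono[of "2/R" 4] by simp
  hence T32: "T \<le> 3/2" unfolding T_def by simp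
  have Tpi: "T \<le> pi/2" using T32 pi_gt3 by simp
  have s2: "(sqrt (2/R))^2 = 2/R" using R(1) by simp
  have "T^2 = (3/4)^2 * (sqrt (2/R))^2" unfolding T_def by (rule power_mult_distrib)
  also have "\<dots> = 9/16 * (2/R)" unfolding s2 by (simp add: power2_eq_square)
  finally have "T^2 = 9/16 * (2/R)" .
  hence RT: "R * T^2 / 2 = 9/16" using R(1) by simp
  define P where "P = (T - R * T^3 / 6) / 4"
  have sub: "{c..d} \<subseteq> {-pi..pi} \<Longrightarrow> GF R integrable_on {c..d}" for c d
    using integrable_subinterval_real[OF Gi] by blast
  have sq: "R * (t - u)^2 / 2 < 1" if "\<bar>t - u\<bar> \<le> T" for t u
  proof -
    have "(t - u)^2 \<le> T^2" using that T0 by (metis abs_le_square_iff abs_of_nonneg)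
    hence "R * (t - u)^2 / 2 \<le> R * T^2 / 2" using R(1) by (simp add: divide_right_mono)
    thus ?thesis using RT by simp
  qed
  have lbint: "P \<le> integral {a..b} (GF R)"
    if ab: "{a..b} \<subseteq> {-pi..pi}" and hi: "((\<lambda>t. (1 - R * (t - u)^2 / 2) / 4) has_integral P) {a..b}"
      and pw: "\<And>t. t \<in> {a..b} \<Longrightarrow> (1 - R * (t - u)^2 / 2) / 4 \<le> GF R t" for a b u
  proof -
    have "integral {a..b} (\<lambda>t. (1 - R * (t - u)^2 / 2) / 4) \<le> integral {a..b} (GF R)"
      using hi sub[OF ab] pw by (intro integral_le) (auto simp: has_integral_integrable)
    moreover have "integral {a..b} (\<lambda>t. (1 - R * (t - u)^2 / 2) / 4) = P" by (rule integral_unique[OF hi])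
    ultimately show ?thesis by linarith
  qed
  have A1: "P \<le> integral {-pi..-pi+T} (GF R)"
  proof (rule lbint[where u="-pi"])
    show "{-pi..-pi+T} \<subseteq> {-pi..pi}" using Tpi pi_gt_zero by auto
    show "((\<lambda>t. (1 - R * (t - - pi)^2 / 2) / 4) has_integral P) {-pi..-pi+T}"
      unfolding P_def using poly_int_right[OF T0, of R "-pi"] by simp
    fix t assume "t \<in> {-pi..-pi+T}"
    hence "\<bar>t - -pi\<bar> \<le> T" by auto
    thus "(1 - R * (t - - pi)^2 / 2) / 4 \<le> GF R t" using GF_lbpi[OF R, of "-pi" t] sq[of t "-pi"] by simp
  qed
  have A6: "P \<le> integral {pi-T..pi} (GF R)"
  proof (rule lbint[where u="pi"])
    show "{pi-T..pi} \<subseteq> {-pi..pi}" using Tpi pi_gt_zero by auto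
    show "((\<lambda>t. (1 - R * (t - pi)^2 / 2) / 4) has_integral P) {pi-T..pi}"
      unfolding P_def using poly_int_left[OF T0, of R "pi"] by simp
    fix t assume "t \<in> {pi-T..pi}"
    hence "\<bar>t - pi\<bar> \<le> T" by auto
    thus "(1 - R * (t - pi)^2 / 2) / 4 \<le> GF R t" using GF_lbpi[OF R, of "pi" t] sq[of t pi] by simp
  qed
  have A3: "P \<le> integral {-T..0} (GF R)"
  proof (rule lbint[where u="0"])
    show "{-T..0} \<subseteq> {-pi..pi}" using Tpi pi_gt_zero by auto
    show "((\<lambda>t. (1 - R * (t - 0)^2 / 2) / 4) has_integral P) {-T..0}"
      unfolding P_def using poly_int_left[OF T0, of R "0"] by simp
    fix t assume "t \<in> {-T..0}"
    hence "\<bar>t - 0\<bar> \<le> T" by auto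
    thus "(1 - R * (t - 0)^2 / 2) / 4 \<le> GF R t" using GF_lb0[OF R, of t] sq[of t 0] by simp
  qed
  have A4: "P \<le> integral {0..T} (GF R)"
  proof (rule lbint[where u="0"])
    show "{0..T} \<subseteq> {-pi..pi}" using Tpi pi_gt_zero by auto
    show "((\<lambda>t. (1 - R * (t - 0)^2 / 2) / 4) has_integral P) {0..T}"
      unfolding P_def using poly_int_right[OF T0, of R "0"] by simp
    fix t assume "t \<in> {0..T}"
    hence "\<bar>t - 0\<bar> \<le> T" by auto
    thus "(1 - R * (t - 0)^2 / 2) / 4 \<le> GF R t" using GF_lb0[OF R, of t] sq[of t 0] by simp
  qed
  have A2: "0 \<le> integral {-pi+T..-T} (GF R)"
    by (rule integral_nonneg[OF sub]) (use Tpi T0 GF_nonneg[OF R(1)] in auto)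
  have A5: "0 \<le> integral {T..pi-T} (GF R)"
    by (rule integral_nonneg[OF sub]) (use Tpi T0 GF_nonneg[OF R(1)] in auto)
  have c1: "integral {-pi..-pi+T} (GF R) + integral {-pi+T..pi} (GF R) = integral {-pi..pi} (GF R)"
    by (rule Henstock_Kurzweil_Integration.integral_combine) (use Tpi T0 Gi in auto)
  have c2: "integral {-pi+T..-T} (GF R) + integral {-T..pi} (GF R) = integral {-pi+T..pi} (GF R)"
    by (rule Henstock_Kurzweil_Integration.integral_combine) (use Tpi T0 pi_gt3 in \<open>auto intro: sub\<close>)
  have c3: "integral {-T..0} (GF R) + integral {0..pi} (GF R) = integral {-T..pi} (GF R)"
    by (rule Henstock_Kurzweil_Integration.integral_combine) (use Tpi T0 pi_gt3 in \<open>auto intro: sub\<close>)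
  have c4: "integral {0..T} (GF R) + integral {T..pi} (GF R) = integral {0..pi} (GF R)"
    by (rule Henstock_Kurzweil_Integration.integral_combine) (use Tpi T0 pi_gt3 in \<open>auto intro: sub\<close>)
  have c5: "integral {T..pi-T} (GF R) + integral {pi-T..pi} (GF R) = integral {T..pi} (GF R)"
    by (rule Henstock_Kurzweil_Integration.integral_combine) (use Tpi T0 pi_gt3 in \<open>auto intro: sub\<close>)
  have "4 * P \<le> integral {-pi..pi} (GF R)"
    using A1 A2 A3 A4 A5 A6 c1 c2 c3 c4 c5 by linarith
  thus ?thesis unfolding P_def by simp
qed

theorem lemma5p1:
  fixes r \<delta> :: real
  assumes "r > 0" and "\<delta> > 0" and "r / \<delta> + 1/2 \<in> \<int>"
  shows "integral {-pi..pi} (\<lambda>\<theta>. Dd \<delta> (r * cos \<theta>) * cos \<theta>)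
           \<ge> 16 * sqrt 2 / (3 * pi^2) * (\<delta> powr (3/2) / sqrt r)"
proof -
  define R where "R = r / \<delta>"
  have R: "R > 0" "R + 1/2 \<in> \<int>" using assms by (simp_all add: R_def)
  have eqf: "Dd \<delta> (r * cos t) * cos t = \<delta> * FF R t" for t
  proof -
    have "r * cos t / \<delta> = R * cos t" by (simp add: R_def)
    thus ?thesis using assms(2) by (simp add: Dd_def Qd_def FF_def frac_def algebra_simps R_def)
  qed
  have Fi: "FF R integrable_on {-pi..pi}" by (rule FF_integrable)
  have GFi: "((\<lambda>t. GF R t - FF R t) has_integral 0) {-pi..pi}" by (rule GF_FF_integral[OF R])
  have "(\<lambda>t. (GF R t - FF R t) + FF R t) integrable_on {-pi..pi}"
    using GFi Fi by (intro integrable_add) (auto simp: has_integral_integrable)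
  hence Gi: "GF R integrable_on {-pi..pi}" by simp
  have "integral {-pi..pi} (\<lambda>t. GF R t - FF R t) = integral {-pi..pi} (GF R) - integral {-pi..pi} (FF R)"
    by (rule integral_diff[OF Gi Fi])
  hence IGF: "integral {-pi..pi} (FF R) = integral {-pi..pi} (GF R)" using integral_unique[OF GFi] by simp
  define T where "T = 3/4 * sqrt (2/R)"
  have lb: "T - R * T^3 / 6 \<le> integral {-pi..pi} (GF R)"
    using GF_integral_lb[OF R Gi] unfolding T_def .
  have s2: "(sqrt (2/R))^2 = 2/R" using R(1) by simp
  have "T^2 = (3/4)^2 * (sqrt (2/R))^2" unfolding T_def by (rule power_mult_distrib)
  also have "\<dots> = 9/16 * (2/R)" unfolding s2 by (simp add: power2_eq_square)
  finally have "T^2 = 9/16 * (2/R)" .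
  hence "R * T^3 / 6 = T * (3/16)" using R(1) by (simp add: power3_eq_cube power2_eq_square field_simps)
  hence lb2: "39/64 * sqrt (2/R) \<le> integral {-pi..pi} (FF R)" using lb IGF unfolding T_def by simp
  have "integral {-pi..pi} (\<lambda>t. Dd \<delta> (r * cos t) * cos t) = integral {-pi..pi} (\<lambda>t. \<delta> * FF R t)"
    by (simp add: eqf)
  also have "\<dots> = \<delta> * integral {-pi..pi} (FF R)"
    using integral_unique[OF has_integral_mult_right[OF integrable_integral[OF Fi], of \<delta>]] .
  finally have I: "integral {-pi..pi} (\<lambda>t. Dd \<delta> (r * cos t) * cos t) = \<delta> * integral {-pi..pi} (FF R)" .
  have pw: "\<delta> powr (3/2) / sqrt r = \<delta> * sqrt (1/R)"
  proof -
    have "\<delta> powr (3/2) = \<delta> powr (1 + 1/2)" by simp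
    also have "\<dots> = \<delta> powr 1 * \<delta> powr (1/2)" by (rule powr_add)
    also have "\<dots> = \<delta> * sqrt \<delta>" using assms(2) by (simp add: powr_half_sqrt)
    finally have "\<delta> powr (3/2) / sqrt r = \<delta> * (sqrt \<delta> / sqrt r)" by simp
    also have "sqrt \<delta> / sqrt r = sqrt (1/R)" by (simp add: R_def real_sqrt_divide)
    finally show ?thesis .
  qed
  have sq2: "sqrt 2 * sqrt (1/R) = sqrt (2/R)" by (simp add: real_sqrt_mult[symmetric])
  have "16 * sqrt 2 / (3 * pi^2) * (\<delta> powr (3/2) / sqrt r) = \<delta> * (16 / (3 * pi^2) * sqrt (2/R))"
    unfolding pw sq2[symmetric] by (simp add: field_simps)
  also have "\<dots> \<le> \<delta> * (39/64 * sqrt (2/R))"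
  proof -
    have "pi^2 \<ge> 3^2" using pi_gt3 by (intro power_mono) auto
    hence "16 / (3 * pi^2) \<le> 39/64" by (simp add: field_simps)
    thus ?thesis using assms(2) R(1) by (intro mult_left_mono mult_right_mono) auto
  qed
  also have "\<dots> \<le> \<delta> * integral {-pi..pi} (FF R)" using lb2 assms(2) by (intro mult_left_mono) auto
  finally show ?thesis unfolding I .
qed

end
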